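(* Let $\mathfrak A$ be an associative $\mathcal A$-algebra with finite basis $B$ compatible with $1$, satisfying $P_1,P_2,P_3$, and let $\Phi:\mathfrak A\to\mathfrak A^\infty_{\mathcal A}=\mathcal A\otimes_{\mathbb Z}\mathfrak A^\infty$ be the $\mathcal A$-linear map $\Phi(b)=\sum_{b_1\in\mathcal D,\,b_2\in B,\,b_1\sim b_2}r^{b_2}_{b,b_1}t_{b_2}$. Make $\mathfrak A$ a left $\mathfrak A^\infty_{\mathcal A}$-module by $t_b*b'=\sum_{b''\in B}\gamma^{b''}_{b,b'}b''$. Then for all $x\in\mathfrak A$ and $b\in B$ we have $xb\equiv\Phi(x)*b\pmod{\mathfrak A_{\prec b}}$, where $\mathfrak A_{\prec b}=\bigoplus_{b'\in B,\,b'\prec b}\mathcal Ab'$.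
   Context: $\mathcal A=\mathbb Z[v,v^{-1}]$. $B$ compatible with $1$: $1=\sum_\mu 1_\mu$ with distinct $1_\mu\in B$, $1_\mu1_{\mu'}=\delta_{\mu\mu'}1_\mu$, and every $b\in B$ satisfies $1_\mu b1_{\mu'}=b$ for some $\mu,\mu'$. Write $bb'=\sum_{b''}r^{b''}_{b,b'}b''$ with $r^{b''}_{b,b'}\in\mathcal A$. $b'\preceq b$ iff $b'$ lies in every $K\subset B$ with $b\in K$ and $\sum_{b_1\in K}\mathcal Ab_1$ a two-sided ideal; $b\sim b'$ iff $b\preceq b'\preceq b$ (two-sided cells); $b'\prec b$ iff $b'\preceq b$ and $b'\not\sim b$. $a(b)$: least $m\ge0$ with $v^{-m}r^{b''}_{b,b'}\in\mathbb Z[v^{-1}]$ for all $b',b''$ in the cell of $b$. $P_1$: $a$ constant on cells. $\gamma^{b''}_{b,b'}\in\mathbb Z$: $v^{-a(b)}r^{b''}_{b,b'}\equiv\gamma^{b''}_{b,b'}\bmod v^{-1}\mathbb Z[v^{-1}]$ if $b,b',b''$ lie in one cell, $0$ otherwise; $\mathfrak A^\infty$ is the ring with $\mathbb Z$-basis $\{t_b\}$ and $t_bt_{b'}=\sum\gamma^{b''}_{b,b'}t_{b''}$. $P_2$: $\mathfrak A^\infty$ has a unit $\sum_{b\in\mathcal D}t_b$ for some $\mathcal D\subset B$ (distinguished elements), compatible with the basis. $P_3$: for $b_2\sim b_4$, $\sum_{\beta\sim b_2}r^\beta_{b_1,b_2}(v)r^{b_4}_{\beta,b_3}(v')=\sum_{\beta\sim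 b_2}r^{b_4}_{b_1,\beta}(v)r^\beta_{b_2,b_3}(v')$ with $v'$ an independent indeterminate. *)

theory Defs
  imports "HOL-Computational_Algebra.Formal_Laurent_Series"
begin

text \<open>The ring A = Z[v,v^-1] is realised as the Laurent polynomials inside the
formal Laurent series int fls (v = fls_X): series with finitely many nonzero coefficients.\<close>

definition laurent_poly :: "int fls \<Rightarrow> bool" where
  "laurent_poly f \<longleftrightarrow> (\<exists>N. \<forall>n\<ge>N. fls_nth f n = 0)"

text \<open>An algebra free over a ring with finite basis 'b is given by structure constants:
r b b' b'' is the coefficient of b'' in the product b b'.  Elements are coefficient
functions 'b => ring.\<close>

definition basis_elem :: "'b \<Rightarrow> 'b \<Rightarrow> 'a::comm_ring_1" where
  "basis_elem b = (\<lambda>b'. if b' = b then 1 else 0)"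

definition amult :: "('b::finite \<Rightarrow> 'b \<Rightarrow> 'b \<Rightarrow> 'a::comm_ring_1) \<Rightarrow> ('b \<Rightarrow> 'a) \<Rightarrow> ('b \<Rightarrow> 'a) \<Rightarrow> ('b \<Rightarrow> 'a)" where
  "amult r x y = (\<lambda>b''. \<Sum>b\<in>UNIV. \<Sum>b'\<in>UNIV. x b * y b' * r b b' b'')"

definition assoc_alg :: "('b::finite \<Rightarrow> 'b \<Rightarrow> 'b \<Rightarrow> 'a::comm_ring_1) \<Rightarrow> bool" where
  "assoc_alg r \<longleftrightarrow> (\<forall>x y z. amult r (amult r x y) z = amult r x (amult r y z))"

definition compat_unit :: "('b::finite \<Rightarrow> 'b \<Rightarrow> 'b \<Rightarrow> 'a::comm_ring_1) \<Rightarrow> 'b set \<Rightarrow> bool" where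
  "compat_unit r U \<longleftrightarrow>
     (\<forall>x. amult r (\<lambda>c. if c \<in> U then 1 else 0) x = x \<and> amult r x (\<lambda>c. if c \<in> U then 1 else 0) = x)
   \<and> (\<forall>u\<in>U. \<forall>u'\<in>U. amult r (basis_elem u) (basis_elem u') = (if u = u' then basis_elem u else (\<lambda>_. 0)))
   \<and> (\<forall>b. \<exists>u\<in>U. \<exists>u'\<in>U. amult r (amult r (basis_elem u) (basis_elem b)) (basis_elem u') = basis_elem b)"

definition alg_elems :: "('b \<Rightarrow> int fls) set" where
  "alg_elems = {x. \<forall>b. laurent_poly (x b)}"

definition span_of :: "'b set \<Rightarrow> ('b \<Rightarrow> int fls) set" where
  "span_of K = {x \<in> alg_elems. \<forall>b. b \<notin> K \<longrightarrow> x b = 0}"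

definition two_sided_ideal :: "('b::finite \<Rightarrow> 'b \<Rightarrow> 'b \<Rightarrow> int fls) \<Rightarrow> ('b \<Rightarrow> int fls) set \<Rightarrow> bool" where
  "two_sided_ideal r S \<longleftrightarrow> S \<subseteq> alg_elems \<and> (\<lambda>_. 0) \<in> S \<and> (\<forall>x\<in>S. \<forall>y\<in>S. (\<lambda>b. x b + y b) \<in> S)
     \<and> (\<forall>c. laurent_poly c \<longrightarrow> (\<forall>x\<in>S. (\<lambda>b. c * x b) \<in> S))
     \<and> (\<forall>x\<in>S. \<forall>y\<in>alg_elems. amult r y x \<in> S \<and> amult r x y \<in> S)"

definition cell_le :: "('b::finite \<Rightarrow> 'b \<Rightarrow> 'b \<Rightarrow> int fls) \<Rightarrow> 'b \<Rightarrow> 'b \<Rightarrow> bool" where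
  "cell_le r b' b \<longleftrightarrow> (\<forall>K. b \<in> K \<and> two_sided_ideal r (span_of K) \<longrightarrow> b' \<in> K)"

definition cell_eq :: "('b::finite \<Rightarrow> 'b \<Rightarrow> 'b \<Rightarrow> int fls) \<Rightarrow> 'b \<Rightarrow> 'b \<Rightarrow> bool" where
  "cell_eq r b b' \<longleftrightarrow> cell_le r b b' \<and> cell_le r b' b"

definition cell_lt :: "('b::finite \<Rightarrow> 'b \<Rightarrow> 'b \<Rightarrow> int fls) \<Rightarrow> 'b \<Rightarrow> 'b \<Rightarrow> bool" where
  "cell_lt r b' b \<longleftrightarrow> cell_le r b' b \<and> \<not> cell_eq r b' b"

text \<open>v^-m f lies in Z[v^-1] iff all coefficients of positive powers of v vanish.\<close>

definition a_fun :: "('b::finite \<Rightarrow> 'b \<Rightarrow> 'b \<Rightarrow> int fls) \<Rightarrow> 'b \<Rightarrow> nat" where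
  "a_fun r b = (LEAST m. \<forall>b' b''. cell_eq r b' b \<and> cell_eq r b'' b \<longrightarrow>
       (\<forall>n>0. fls_nth (fls_X_inv ^ m * r b b' b'') n = 0))"

definition gamma :: "('b::finite \<Rightarrow> 'b \<Rightarrow> 'b \<Rightarrow> int fls) \<Rightarrow> 'b \<Rightarrow> 'b \<Rightarrow> 'b \<Rightarrow> int" where
  "gamma r b b' b'' = (if cell_eq r b b' \<and> cell_eq r b b''
      then fls_nth (fls_X_inv ^ a_fun r b * r b b' b'') 0 else 0)"

definition P1 :: "('b::finite \<Rightarrow> 'b \<Rightarrow> 'b \<Rightarrow> int fls) \<Rightarrow> bool" where
  "P1 r \<longleftrightarrow> (\<forall>b b'. cell_eq r b b' \<longrightarrow> a_fun r b = a_fun r b')"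

text \<open>P3, written coefficientwise in Z[v,v^-1,v',v'^-1] (coefficient of v^i v'^j).\<close>

definition P3 :: "('b::finite \<Rightarrow> 'b \<Rightarrow> 'b \<Rightarrow> int fls) \<Rightarrow> bool" where
  "P3 r \<longleftrightarrow> (\<forall>b1 b2 b3 b4. cell_eq r b2 b4 \<longrightarrow> (\<forall>i j.
     (\<Sum>\<beta>\<in>{\<beta>. cell_eq r \<beta> b2}. fls_nth (r b1 b2 \<beta>) i * fls_nth (r \<beta> b3 b4) j)
   = (\<Sum>\<beta>\<in>{\<beta>. cell_eq r \<beta> b2}. fls_nth (r b1 \<beta> b4) i * fls_nth (r b2 b3 \<beta>) j)))"

text \<open>Elements of A tensor A^infty: coefficient functions 'b => int fls (coefficient of t_b).\<close>

definition Phi :: "('b::finite \<Rightarrow> 'b \<Rightarrow> 'b \<Rightarrow> int fls) \<Rightarrow> 'b set \<Rightarrow> ('b \<Rightarrow> int fls) \<Rightarrow> ('b \<Rightarrow> int fls)" where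
  "Phi r D x = (\<lambda>b2. \<Sum>b\<in>UNIV. x b * (\<Sum>b1\<in>{b1 \<in> D. cell_eq r b1 b2}. r b b1 b2))"

definition act :: "('b::finite \<Rightarrow> 'b \<Rightarrow> 'b \<Rightarrow> int fls) \<Rightarrow> ('b \<Rightarrow> int fls) \<Rightarrow> ('b \<Rightarrow> int fls) \<Rightarrow> ('b \<Rightarrow> int fls)" where
  "act r c y = (\<lambda>b''. \<Sum>b\<in>UNIV. \<Sum>b'\<in>UNIV. c b * y b' * of_int (gamma r b b' b''))"

end

theory Submission imports Defs begin

lemma lp_zero[simp]: "laurent_poly 0" by (auto simp: laurent_poly_def)
lemma lp_of_int[simp]: "laurent_poly (of_int k)"
  unfolding laurent_poly_def by (rule exI[of _ 1]) (simp add: fls_of_int_nth)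
lemma lp_one[simp]: "laurent_poly 1" using lp_of_int[of 1] by simp
lemma lp_add: "laurent_poly f \<Longrightarrow> laurent_poly g \<Longrightarrow> laurent_poly (f + g)"
proof -
  assume "laurent_poly f" "laurent_poly g"
  then obtain N M where "\<forall>n\<ge>N. fls_nth f n = 0" "\<forall>n\<ge>M. fls_nth g n = 0"
    unfolding laurent_poly_def by blast
  then have "\<forall>n\<ge>max N M. fls_nth (f + g) n = 0" by simp
  then show ?thesis unfolding laurent_poly_def by blast
qed
lemma lp_diff: "laurent_poly f \<Longrightarrow> laurent_poly g \<Longrightarrow> laurent_poly (f - g)"
proof -
  assume "laurent_poly f" "laurent_poly g"
  then obtain N M where "\<forall>n\<ge>N. fls_nth f n = 0" "\<forall>n\<ge>M. fls_nth g n = 0"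
    unfolding laurent_poly_def by blast
  then have "\<forall>n\<ge>max N M. fls_nth (f - g) n = 0" by simp
  then show ?thesis unfolding laurent_poly_def by blast
qed
lemma lp_mult: assumes "laurent_poly f" "laurent_poly g" shows "laurent_poly (f * g)"
proof -
  obtain N where N: "\<forall>n\<ge>N. fls_nth f n = 0" using assms(1) laurent_poly_def by blast
  obtain M where M: "\<forall>n\<ge>M. fls_nth g n = 0" using assms(2) laurent_poly_def by blast
  have "fls_nth (f*g) n = 0" if "n \<ge> N + M" for n
  proof -
    have "fls_nth (f*g) n = (\<Sum>i=fls_subdegree f..n - fls_subdegree g. fls_nth f i * fls_nth g (n - i))"
      by (rule fls_times_nth(2))
    also have "\<dots> = 0"
    proof (rule sum.neutral, rule ballI)
      fix i assume "i \<in> {fls_subdegree f..n - fls_subdegree g}"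
      show "fls_nth f i * fls_nth g (n - i) = 0"
      proof (cases "i \<ge> N")
        case True then show ?thesis using N by simp
      next
        case False then have "n - i \<ge> M" using that by simp
        then show ?thesis using M by simp
      qed
    qed
    finally show ?thesis .
  qed
  then show ?thesis unfolding laurent_poly_def by blast
qed
lemma lp_sum: "(\<And>x. x \<in> A \<Longrightarrow> laurent_poly (f x)) \<Longrightarrow> laurent_poly (\<Sum>x\<in>A. f x)"
  by (induction A rule: infinite_finite_induct) (auto intro: lp_add)

lemma cell_le_refl: "cell_le r b b" by (simp add: cell_le_def)
lemma cell_le_trans: "cell_le r a b \<Longrightarrow> cell_le r b c \<Longrightarrow> cell_le r a c"
  by (simp add: cell_le_def)
lemma cell_eq_refl: "cell_eq r b b" by (simp add: cell_eq_def cell_le_refl)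
lemma cell_eq_sym: "cell_eq r a b \<Longrightarrow> cell_eq r b a" by (simp add: cell_eq_def)
lemma cell_eq_trans: "cell_eq r a b \<Longrightarrow> cell_eq r b c \<Longrightarrow> cell_eq r a c"
  by (meson cell_eq_def cell_le_trans)

lemma amult_basis: "amult r (basis_elem b') (basis_elem b) b'' = r b' b b''"
proof -
  have "\<And>c c'. basis_elem b' c * basis_elem b c' * r c c' b'' = (if c = b' then (if c' = b then r c c' b'' else 0) else 0)"
    by (simp add: basis_elem_def)
  moreover have "\<And>c. (\<Sum>c'\<in>UNIV. (if c = b' then if c' = b then r c c' b'' else 0 else 0)) = (if c = b' then r b' b b'' else 0)"
    by (case_tac "c = b'") simp_all
  ultimately show ?thesis by (simp add: amult_def)
qed

lemma act_basis: "act r c (basis_elem b) b'' = (\<Sum>z\<in>UNIV. c z * of_int (gamma r z b b''))"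
proof -
  have "\<And>z c'. c z * basis_elem b c' * of_int (gamma r z c' b'') = (if c' = b then c z * of_int (gamma r z b b'') else 0)"
    by (simp add: basis_elem_def)
  then show ?thesis by (simp add: act_def)
qed

lemma basis_alg: "basis_elem b \<in> alg_elems"
  by (simp add: alg_elems_def basis_elem_def)

lemma basis_span: assumes "b \<in> K" shows "basis_elem b \<in> span_of K"
proof -
  have "\<forall>c. c \<notin> K \<longrightarrow> basis_elem b c = (0::int fls)"
    using assms unfolding basis_elem_def by auto
  then show "basis_elem b \<in> span_of K" using basis_alg[of b] unfolding span_of_def by simp
qed

lemma r_zero:
  assumes "\<not> cell_le r b'' b" shows "r b' b b'' = 0"
proof -
  have "\<exists>K. b \<in> K \<and> two_sided_ideal r (span_of K) \<and> b'' \<notin> K"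
    using assms unfolding cell_le_def by blast
  then obtain K where K: "b \<in> K" "two_sided_ideal r (span_of K)" "b'' \<notin> K"
    by blast
  have I: "\<And>x y. x \<in> span_of K \<Longrightarrow> y \<in> alg_elems \<Longrightarrow> amult r y x \<in> span_of K"
    using K(2) unfolding two_sided_ideal_def by blast
  have "amult r (basis_elem b') (basis_elem b) \<in> span_of K"
    by (rule I[OF basis_span[OF K(1)] basis_alg])
  then have "amult r (basis_elem b') (basis_elem b) b'' = 0"
    using K(3) unfolding span_of_def by simp
  then show ?thesis unfolding amult_basis .
qed

lemma gamma_unit:
  assumes P2: "compat_unit (gamma r) D"
  shows "(\<Sum>d\<in>D. gamma r d b \<beta>) = (if \<beta> = b then 1 else 0)"
proof -
  have "amult (gamma r) (\<lambda>c. if c \<in> D then 1 else 0) (basis_elem b) \<beta> = basis_elem b \<beta>"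
  proof -
    have "amult (gamma r) (\<lambda>c. if c \<in> D then 1 else 0) (basis_elem b) = basis_elem b"
      using P2 unfolding compat_unit_def by blast
    then show ?thesis by simp
  qed
  moreover have "\<And>c c'. (if c \<in> D then 1 else 0) * basis_elem b c' * gamma r c c' \<beta>
      = (if c' = b then (if c \<in> D then gamma r c b \<beta> else 0) else 0)"
    by (simp add: basis_elem_def)
  ultimately have "(\<Sum>c\<in>UNIV. if c \<in> D then gamma r c b \<beta> else 0) = basis_elem b \<beta>"
    by (simp add: amult_def)
  then show ?thesis
    by (simp add: sum.If_cases basis_elem_def)
qed

lemma key:
  fixes r :: "'b::finite \<Rightarrow> 'b \<Rightarrow> 'b \<Rightarrow> int fls"
  assumes P1: "P1 r" and P2: "compat_unit (gamma r) D" and P3: "P3 r"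
    and eq: "cell_eq r b'' b"
  shows "fls_nth (r b' b b'') n =
    (\<Sum>z\<in>UNIV. \<Sum>d\<in>D. if cell_eq r d z then fls_nth (r b' d z) n * gamma r z b b'' else 0)"
proof -
  define a where "a = a_fun r b"
  have G1: "gamma r z b b'' = (if cell_eq r z b then fls_nth (r z b b'') (int a) else 0)" for z
  proof (cases "cell_eq r z b")
    case True
    then have "cell_eq r z b''" using eq cell_eq_sym cell_eq_trans by metis
    moreover have "a_fun r z = a" using True P1 unfolding P1_def a_def by blast
    ultimately show ?thesis using True
      by (simp add: gamma_def fls_X_inv_power_times_conv_shift)
  qed (simp add: gamma_def)
  have G2: "gamma r d b \<beta> = (if cell_eq r d b \<and> cell_eq r \<beta> b then fls_nth (r d b \<beta>) (int a) else 0)" for d \<beta>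
  proof (cases "cell_eq r d b \<and> cell_eq r \<beta> b")
    case True
    then have "cell_eq r d \<beta>" using cell_eq_sym cell_eq_trans by metis
    moreover have "a_fun r d = a" using True P1 unfolding P1_def a_def by blast
    ultimately show ?thesis using True
      by (simp add: gamma_def fls_X_inv_power_times_conv_shift)
  next
    case False
    then have "\<not> (cell_eq r d b \<and> cell_eq r d \<beta>)" using cell_eq_sym cell_eq_trans by metis
    then show ?thesis using False unfolding gamma_def by auto
  qed
  define F where "F d = (\<Sum>\<beta>\<in>{\<beta>. cell_eq r \<beta> d}. fls_nth (r b' \<beta> b'') n * fls_nth (r d b \<beta>) (int a))" for d
  define H where "H d = (\<Sum>\<beta>\<in>{\<beta>. cell_eq r \<beta> d}. fls_nth (r b' d \<beta>) n * fls_nth (r \<beta> b b'') (int a))" for d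
  have FH: "cell_eq r d b \<Longrightarrow> F d = H d" for d
  proof -
    assume "cell_eq r d b"
    then have "cell_eq r d b''" using eq cell_eq_sym cell_eq_trans by metis
    then show "F d = H d" using P3 unfolding P3_def F_def H_def by (metis (no_types, lifting) mult.commute sum.cong)
  qed
  have "fls_nth (r b' b b'') n = (\<Sum>\<beta>\<in>UNIV. fls_nth (r b' \<beta> b'') n * (if \<beta> = b then 1 else 0))"
  proof -
    have "(\<Sum>\<beta>\<in>UNIV. fls_nth (r b' \<beta> b'') n * (if \<beta> = b then 1 else 0)) = (\<Sum>\<beta>\<in>UNIV. if \<beta> = b then fls_nth (r b' \<beta> b'') n else 0)"
      by (rule sum.cong) auto
    then show ?thesis by simp
  qed
  also have "\<dots> = (\<Sum>\<beta>\<in>UNIV. fls_nth (r b' \<beta> b'') n * (\<Sum>d\<in>D. gamma r d b \<beta>))"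
    using gamma_unit[OF P2] by simp
  also have "\<dots> = (\<Sum>d\<in>D. \<Sum>\<beta>\<in>UNIV. fls_nth (r b' \<beta> b'') n * gamma r d b \<beta>)"
    by (simp add: sum_distrib_left sum.swap[of _ D])
  also have "\<dots> = (\<Sum>d\<in>D. if cell_eq r d b then F d else 0)"
  proof (rule sum.cong[OF refl])
    fix d assume "d \<in> D"
    show "(\<Sum>\<beta>\<in>UNIV. fls_nth (r b' \<beta> b'') n * gamma r d b \<beta>) = (if cell_eq r d b then F d else 0)"
    proof (cases "cell_eq r d b")
      case True
      then have "\<And>\<beta>. cell_eq r \<beta> b = cell_eq r \<beta> d" using cell_eq_sym cell_eq_trans by metis
      then show ?thesis using True unfolding F_def G2
        by (simp add: sum.inter_filter[symmetric] if_distrib cong: if_cong)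
    qed (simp add: G2)
  qed
  also have "\<dots> = (\<Sum>d\<in>D. if cell_eq r d b then H d else 0)"
    using FH by (simp cong: if_cong)
  also have "\<dots> = (\<Sum>d\<in>D. \<Sum>z\<in>UNIV. if cell_eq r d z then fls_nth (r b' d z) n * gamma r z b b'' else 0)"
  proof (rule sum.cong[OF refl])
    fix d assume "d \<in> D"
    show "(if cell_eq r d b then H d else 0) = (\<Sum>z\<in>UNIV. if cell_eq r d z then fls_nth (r b' d z) n * gamma r z b b'' else 0)"
    proof (cases "cell_eq r d b")
      case True
      then have c: "\<And>z. (cell_eq r d z \<and> cell_eq r z b) = cell_eq r z d" using cell_eq_sym cell_eq_trans by metis
      have "(\<Sum>z\<in>UNIV. if cell_eq r d z then fls_nth (r b' d z) n * gamma r z b b'' else 0)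
          = (\<Sum>z\<in>UNIV. if cell_eq r z d then fls_nth (r b' d z) n * fls_nth (r z b b'') (int a) else 0)"
        by (rule sum.cong[OF refl]) (use c in \<open>auto simp: G1\<close>)
      also have "\<dots> = H d" unfolding H_def by (simp add: sum.inter_filter[symmetric])
      finally show ?thesis using True by simp
    next
      case False
      then have "\<And>z. \<not> (cell_eq r d z \<and> cell_eq r z b)" using cell_eq_trans by metis
      then show ?thesis using False unfolding G1
        by (simp add: if_distrib if_if_eq_conj cong: if_cong)
    qed
  qed
  also have "\<dots> = (\<Sum>z\<in>UNIV. \<Sum>d\<in>D. if cell_eq r d z then fls_nth (r b' d z) n * gamma r z b b'' else 0)"
    by (rule sum.swap)
  finally show ?thesis .
qed

lemma amult_x_basis: "amult r x (basis_elem b) b'' = (\<Sum>b'\<in>UNIV. x b' * r b' b b'')"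
proof -
  have "\<And>c c'. x c * basis_elem b c' * r c c' b'' = (if c' = b then x c * r c b b'' else 0)"
    by (simp add: basis_elem_def)
  then show ?thesis by (simp add: amult_def)
qed

lemma r_expand:
  fixes r :: "'b::finite \<Rightarrow> 'b \<Rightarrow> 'b \<Rightarrow> int fls"
  assumes P1: "P1 r" and P2: "compat_unit (gamma r) D" and P3: "P3 r"
    and eq: "cell_eq r b'' b"
  shows "r b' b b'' = (\<Sum>z\<in>UNIV. (\<Sum>d\<in>{d \<in> D. cell_eq r d z}. r b' d z) * of_int (gamma r z b b''))"
proof (rule fls_eqI)
  fix n
  show "fls_nth (r b' b b'') n = fls_nth (\<Sum>z\<in>UNIV. (\<Sum>d\<in>{d \<in> D. cell_eq r d z}. r b' d z) * of_int (gamma r z b b'')) n"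
  proof -
    have e: "(\<Sum>d\<in>{d \<in> D. cell_eq r d z}. r b' d z) * of_int (gamma r z b b'')
       = (\<Sum>d\<in>D. if cell_eq r d z then r b' d z * of_int (gamma r z b b'') else 0)" for z
      by (simp add: sum.inter_filter sum_distrib_right) (rule sum.cong, auto)
    have f: "fls_nth (if cell_eq r d z then r b' d z * of_int (gamma r z b b'') else 0) n
       = (if cell_eq r d z then fls_nth (r b' d z) n * gamma r z b b'' else 0)" for d z
      by simp
    show ?thesis unfolding key[OF assms, of b' n] e fls_nth_sum f ..
  qed
qed

theorem mainTheorem6:
  fixes r :: "'b::finite \<Rightarrow> 'b \<Rightarrow> 'b \<Rightarrow> int fls" and U D :: "'b set"
    and x :: "'b \<Rightarrow> int fls" and b :: 'b
  assumes coeffs: "\<forall>b b' b''. laurent_poly (r b b' b'')"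
    and assoc: "assoc_alg r"
    and unit: "compat_unit r U"
    and P1: "P1 r"
    and P2: "compat_unit (gamma r) D"
    and P3: "P3 r"
    and x: "x \<in> alg_elems"
  shows "(\<lambda>b''. amult r x (basis_elem b) b'' - act r (Phi r D x) (basis_elem b) b'') \<in> span_of {b'. cell_lt r b' b}"
proof -
  have xl: "laurent_poly (x c)" for c using x by (simp add: alg_elems_def)
  have Phil: "laurent_poly (Phi r D x z)" for z
    unfolding Phi_def using coeffs xl by (intro lp_sum lp_mult) auto
  have alg: "laurent_poly (amult r x (basis_elem b) b'' - act r (Phi r D x) (basis_elem b) b'')" for b''
    unfolding amult_x_basis act_basis
  proof (rule lp_diff)
    show "laurent_poly (\<Sum>b'\<in>UNIV. x b' * r b' b b'')"
      by (rule lp_sum, rule lp_mult) (use coeffs xl in auto)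
    show "laurent_poly (\<Sum>z\<in>UNIV. Phi r D x z * of_int (gamma r z b b''))"
      by (rule lp_sum, rule lp_mult) (use Phil in auto)
  qed
  have zero: "amult r x (basis_elem b) b'' - act r (Phi r D x) (basis_elem b) b'' = 0"
    if "\<not> cell_lt r b'' b" for b''
  proof (cases "cell_le r b'' b")
    case False
    have g: "gamma r z b b'' = 0" for z
    proof (rule ccontr)
      assume "gamma r z b b'' \<noteq> 0"
      then have "cell_eq r z b" "cell_eq r z b''" by (auto simp: gamma_def split: if_splits)
      then have "cell_eq r b'' b" using cell_eq_sym cell_eq_trans by metis
      then show False using False cell_eq_def by blast
    qed
    show ?thesis unfolding amult_x_basis act_basis using r_zero[OF False] g by simp
  next
    case True
    then have eq: "cell_eq r b'' b" using that cell_lt_def by blast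
    have "amult r x (basis_elem b) b'' = (\<Sum>b'\<in>UNIV. x b' * (\<Sum>z\<in>UNIV. (\<Sum>d\<in>{d \<in> D. cell_eq r d z}. r b' d z) * of_int (gamma r z b b'')))"
      unfolding amult_x_basis by (rule sum.cong[OF refl], subst r_expand[OF P1 P2 P3 eq], rule refl)
    also have "\<dots> = (\<Sum>z\<in>UNIV. Phi r D x z * of_int (gamma r z b b''))"
    proof -
      define S where "S b' z = (\<Sum>d\<in>{d \<in> D. cell_eq r d z}. r b' d z)" for b' z
      have "(\<Sum>b'\<in>UNIV. x b' * (\<Sum>z\<in>UNIV. S b' z * of_int (gamma r z b b'')))
          = (\<Sum>b'\<in>UNIV. \<Sum>z\<in>UNIV. x b' * S b' z * of_int (gamma r z b b''))"
        by (simp add: sum_distrib_left mult.assoc)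
      also have "\<dots> = (\<Sum>z\<in>UNIV. \<Sum>b'\<in>UNIV. x b' * S b' z * of_int (gamma r z b b''))"
        by (rule sum.swap)
      also have "\<dots> = (\<Sum>z\<in>UNIV. Phi r D x z * of_int (gamma r z b b''))"
        unfolding Phi_def S_def by (simp add: sum_distrib_right)
      finally show ?thesis unfolding S_def .
    qed
    also have "\<dots> = act r (Phi r D x) (basis_elem b) b''" by (simp add: act_basis)
    finally show ?thesis by simp
  qed
  show ?thesis unfolding span_of_def alg_elems_def using alg zero by auto
qed

end
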